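(* Let $\Phi$ be a channel matrix whose rows $P^1,\dots,P^4\in\Delta^n$ are in general position, let $Q^0$ be the equidistant point from $P^1,\dots,P^4$ with barycentric coordinate $\boldsymbol\lambda^0$, and suppose $\lambda^0_1<0$, $\lambda^0_2<0$, $\lambda^0_3\ge0$, $\lambda^0_4\ge0$. Let $Q^{1(1)}=\pi(Q^0|L(P^2,P^3,P^4))$ and $Q^{1(2)}=\pi(Q^0|L(P^1,P^3,P^4))$ with barycentric coordinates $\boldsymbol\lambda^{1(1)},\boldsymbol\lambda^{1(2)}$ about $P^1,\dots,P^4$, and suppose $\lambda^{1(2)}_1<0$. Suppose further $\lambda^{1(1)}_2<0$, $\lambda^{1(1)}_3\ge0$, $\lambda^{1(1)}_4\ge0$, and let $Q^2=\pi(Q^{1(1)}|L(P^3,P^4))$. Then the output distribution achieving the channel capacity is $Q^\ast=Q^2$ and the channel capacity is $C=D(P^3\|Q^2)$.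
   Context: $\Delta^n=\{Q:Q_j>0,\sum_jQ_j=1\}$, $\bar\Delta^m=\{\boldsymbol\lambda:\lambda_i\ge0,\sum_i\lambda_i=1\}$; $D(Q\|Q')=\sum_jQ_j\log(Q_j/Q'_j)$. Rows are in general position if $P^2-P^1,\dots,P^m-P^1$ are linearly independent. $L(S^1,\dots,S^r)=\{\sum_i\lambda_iS^i:\sum_i\lambda_i=1\}\cap\Delta^n$; for such an affine subspace $L$, $\pi(Q'|L)$ is the unique $Q\in L$ minimizing $D(Q\|Q')$. The barycentric coordinate of $Q\in L(P^1,\dots,P^m)$ is the unique $\boldsymbol\lambda$ with $\sum_i\lambda_i=1$, $Q=\sum_i\lambda_iP^i$. The equidistant point is the unique $Q^0\in L(P^1,\dots,P^m)$ with all $D(P^i\|Q^0)$ equal. Mutual information $I(\boldsymbol\lambda,\Phi)=\sum_{i,j}\lambda_iP^i_j\log(P^i_j/Q_j)$ with $Q=\boldsymbol\lambda\Phi$; capacity $C=\max_{\boldsymbol\lambda\in\bar\Delta^m}I(\boldsymbol\lambda,\Phi)$; the capacity-achieving output distribution is $Q^\ast=\boldsymbol\lambda^\ast\Phi$ for a maximizer $\boldsymbol\lambda^\ast$ (unique). *)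

theory Defs
  imports Complex_Main
begin

text \<open>Output alphabet: a finite type 'b. Distributions: functions 'b \<Rightarrow> real.
  Rows of the channel matrix: P :: nat \<Rightarrow> 'b \<Rightarrow> real, row i = P i.\<close>

definition open_simplex :: "('b::finite \<Rightarrow> real) set" where
  "open_simplex = {Q. (\<forall>j. Q j > 0) \<and> (\<Sum>j\<in>UNIV. Q j) = 1}"

definition closed_simplex :: "nat set \<Rightarrow> (nat \<Rightarrow> real) set" where
  "closed_simplex I = {l. (\<forall>i\<in>I. l i \<ge> 0) \<and> (\<forall>i. i \<notin> I \<longrightarrow> l i = 0) \<and> (\<Sum>i\<in>I. l i) = 1}"

definition KL :: "('b::finite \<Rightarrow> real) \<Rightarrow> ('b \<Rightarrow> real) \<Rightarrow> real" where
  "KL Q Q' = (\<Sum>j\<in>UNIV. Q j * ln (Q j / Q' j))"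

definition comb :: "(nat \<Rightarrow> 'b \<Rightarrow> real) \<Rightarrow> nat set \<Rightarrow> (nat \<Rightarrow> real) \<Rightarrow> ('b \<Rightarrow> real)" where
  "comb P I l = (\<lambda>j. \<Sum>i\<in>I. l i * P i j)"

definition general_position :: "(nat \<Rightarrow> 'b \<Rightarrow> real) \<Rightarrow> nat \<Rightarrow> bool" where
  "general_position P m \<longleftrightarrow>
     (\<forall>c. (\<forall>j. (\<Sum>i\<in>{2..m}. c i * (P i j - P 1 j)) = 0) \<longrightarrow> (\<forall>i\<in>{2..m}. c i = 0))"

definition aff_L :: "(nat \<Rightarrow> 'b::finite \<Rightarrow> real) \<Rightarrow> nat set \<Rightarrow> ('b \<Rightarrow> real) set" where
  "aff_L P I = {Q. \<exists>l. (\<Sum>i\<in>I. l i) = 1 \<and> Q = comb P I l} \<inter> open_simplex"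

definition proj :: "('b::finite \<Rightarrow> real) \<Rightarrow> ('b \<Rightarrow> real) set \<Rightarrow> ('b \<Rightarrow> real)" where
  "proj Q' L = (THE Q. Q \<in> L \<and> (\<forall>R\<in>L. KL Q Q' \<le> KL R Q'))"

definition bary :: "(nat \<Rightarrow> 'b \<Rightarrow> real) \<Rightarrow> nat set \<Rightarrow> ('b \<Rightarrow> real) \<Rightarrow> (nat \<Rightarrow> real)" where
  "bary P I Q = (THE l. (\<forall>i. i \<notin> I \<longrightarrow> l i = 0) \<and> (\<Sum>i\<in>I. l i) = 1 \<and> Q = comb P I l)"

definition equidistant :: "(nat \<Rightarrow> 'b::finite \<Rightarrow> real) \<Rightarrow> nat set \<Rightarrow> ('b \<Rightarrow> real)" where
  "equidistant P I = (THE Q. Q \<in> aff_L P I \<and> (\<forall>i\<in>I. \<forall>k\<in>I. KL (P i) Q = KL (P k) Q))"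

definition mutual_info :: "(nat \<Rightarrow> 'b::finite \<Rightarrow> real) \<Rightarrow> nat set \<Rightarrow> (nat \<Rightarrow> real) \<Rightarrow> real" where
  "mutual_info P I l = (\<Sum>i\<in>I. \<Sum>j\<in>UNIV. l i * P i j * ln (P i j / comb P I l j))"

definition capacity :: "(nat \<Rightarrow> 'b::finite \<Rightarrow> real) \<Rightarrow> nat set \<Rightarrow> real" where
  "capacity P I = (SUP l\<in>closed_simplex I. mutual_info P I l)"

end

theory Submission
  imports Defs "HOL-Analysis.Analysis" "HOL-Real_Asymp.Real_Asymp"
begin


lemma os_pos: "Q \<in> open_simplex \<Longrightarrow> Q j > 0" by (simp add: open_simplex_def)
lemma os_sum: "Q \<in> open_simplex \<Longrightarrow> (\<Sum>j\<in>UNIV. Q j) = 1" by (simp add: open_simplex_def)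
lemma os_le1:
  fixes Q :: "'b::finite \<Rightarrow> real"
  assumes "Q \<in> open_simplex" shows "Q j \<le> 1"
proof -
  have "Q j \<le> (\<Sum>j\<in>UNIV. Q j)"
    by (rule member_le_sum) (use assms os_pos in \<open>auto intro: less_imp_le\<close>)
  then show ?thesis using os_sum[OF assms] by simp
qed

lemma KL_alt:
  assumes "\<forall>j. Q j > 0" "\<forall>j. R j > 0"
  shows "KL Q R = (\<Sum>j\<in>UNIV. Q j * (ln (Q j) - ln (R j)))"
  unfolding KL_def using assms by (intro sum.cong refl) (simp add: ln_div less_imp_neq[symmetric])

lemma KL_diff:
  assumes "\<forall>j. P j > 0" "\<forall>j. R j > 0" "\<forall>j. S j > 0"
  shows "KL P R - KL P S = (\<Sum>j\<in>UNIV. P j * (ln (S j) - ln (R j)))"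
  by (simp add: KL_alt assms sum_subtractf[symmetric] algebra_simps)

lemma xlog_ge:
  fixes x y :: real assumes "0 < x" "0 < y"
  shows "x * (ln x - ln y) \<ge> x - y"
proof -
  have "ln (y/x) \<le> y/x - 1" using assms by (intro ln_le_minus_one) simp
  then have "ln y - ln x \<le> y/x - 1" using assms by (simp add: ln_div)
  then have "x * (ln y - ln x) \<le> x * (y/x - 1)" using assms by (intro mult_left_mono) auto
  then show ?thesis using assms by (simp add: algebra_simps)
qed

lemma xlog_eq:
  fixes x y :: real assumes "0 < x" "0 < y" "x * (ln x - ln y) = x - y"
  shows "x = y"
proof -
  have "ln y - ln x = y/x - 1"
  proof -
    have "x * (ln y - ln x) = x * (y/x - 1)" using assms by (simp add: algebra_simps)
    then show ?thesis using assms by simp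
  qed
  then have "ln (y/x) = y/x - 1" using assms by (simp add: ln_div)
  then have "y/x = 1" using assms by (intro ln_eq_minus_one) auto
  then show ?thesis using assms by simp
qed

lemma xlog_le:
  fixes x y :: real assumes "0 < x" "0 < y"
  shows "x * (ln x - ln y) \<le> (x - y) + (x - y)^2 / y"
proof -
  have "ln (x/y) \<le> x/y - 1" using assms by (intro ln_le_minus_one) simp
  then have "ln x - ln y \<le> x/y - 1" using assms by (simp add: ln_div)
  then have "x * (ln x - ln y) \<le> x * (x/y - 1)" using assms by (intro mult_left_mono) auto
  also have "x * (x/y - 1) = (x - y) + (x - y)^2 / y" using assms
    by (simp add: field_simps power2_eq_square)
  finally show ?thesis .
qed

lemma gibbs_terms:
  fixes Q R :: "'b::finite \<Rightarrow> real"
  assumes "Q \<in> open_simplex" "R \<in> open_simplex"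
  shows "KL Q R = (\<Sum>j\<in>UNIV. Q j * (ln (Q j) - ln (R j)) - (Q j - R j))"
proof -
  have "(\<Sum>j\<in>UNIV. Q j - R j) = 0" using assms by (simp add: sum_subtractf os_sum)
  then show ?thesis using assms by (simp add: KL_alt os_pos sum_subtractf)
qed

lemma gibbs:
  fixes Q R :: "'b::finite \<Rightarrow> real"
  assumes "Q \<in> open_simplex" "R \<in> open_simplex"
  shows "KL Q R \<ge> 0"
  unfolding gibbs_terms[OF assms]
  by (rule sum_nonneg) (use xlog_ge os_pos assms in \<open>force\<close>)

lemma gibbs_eq:
  fixes Q R :: "'b::finite \<Rightarrow> real"
  assumes "Q \<in> open_simplex" "R \<in> open_simplex" "KL Q R \<le> 0"
  shows "Q = R"
proof
  fix j
  have nn: "\<forall>j\<in>UNIV. Q j * (ln (Q j) - ln (R j)) - (Q j - R j) \<ge> 0"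
    using xlog_ge os_pos assms by force
  have "KL Q R = 0" using gibbs[OF assms(1,2)] assms(3) by simp
  then have "(\<Sum>j\<in>UNIV. Q j * (ln (Q j) - ln (R j)) - (Q j - R j)) = 0"
    using gibbs_terms[OF assms(1,2)] by simp
  then have "Q j * (ln (Q j) - ln (R j)) - (Q j - R j) = 0"
    using sum_nonneg_eq_0_iff[of UNIV "\<lambda>j. Q j * (ln (Q j) - ln (R j)) - (Q j - R j)"] nn by simp
  then show "Q j = R j" using xlog_eq os_pos assms by auto
qed

lemma mix:
  assumes "\<forall>i\<in>I. \<forall>j. P i j > 0" "\<forall>j. R j > 0" "\<forall>j. S j > 0"
  shows "(\<Sum>i\<in>I. l i * (KL (P i) R - KL (P i) S))
           = (\<Sum>j\<in>UNIV. comb P I l j * (ln (S j) - ln (R j)))"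
proof -
  have "(\<Sum>i\<in>I. l i * (KL (P i) R - KL (P i) S))
        = (\<Sum>i\<in>I. \<Sum>j\<in>UNIV. l i * P i j * (ln (S j) - ln (R j)))"
    using assms by (intro sum.cong refl) (simp add: KL_diff sum_distrib_left mult.assoc)
  also have "\<dots> = (\<Sum>j\<in>UNIV. \<Sum>i\<in>I. l i * P i j * (ln (S j) - ln (R j)))" by (rule sum.swap)
  also have "\<dots> = (\<Sum>j\<in>UNIV. comb P I l j * (ln (S j) - ln (R j)))"
    by (simp add: comb_def sum_distrib_right)
  finally show ?thesis .
qed

lemma comb_sum:
  fixes P :: "nat \<Rightarrow> 'b::finite \<Rightarrow> real"
  assumes "\<forall>i\<in>I. P i \<in> open_simplex"
  shows "(\<Sum>j\<in>UNIV. comb P I l j) = sum l I"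
proof -
  have "(\<Sum>j\<in>UNIV. comb P I l j) = (\<Sum>i\<in>I. l i * (\<Sum>j\<in>UNIV. P i j))"
    unfolding comb_def by (subst sum.swap) (simp add: sum_distrib_left)
  also have "\<dots> = sum l I" using assms by (simp add: os_sum)
  finally show ?thesis .
qed

lemma comb_lin:
  assumes "\<forall>k\<in>I. (\<Sum>j\<in>UNIV. P k j * w j) = c" "sum l I = 1"
  shows "(\<Sum>j\<in>UNIV. comb P I l j * w j) = c"
proof -
  have "(\<Sum>j\<in>UNIV. comb P I l j * w j) = (\<Sum>k\<in>I. l k * (\<Sum>j\<in>UNIV. P k j * w j))"
    unfolding comb_def by (simp add: sum_distrib_right sum_distrib_left mult.assoc) (rule sum.swap)
  also have "\<dots> = (\<Sum>k\<in>I. l k * c)" using assms by simp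
  finally show ?thesis using assms by (simp add: sum_distrib_right[symmetric])
qed



lemma xlnx_cont: "continuous_on {0..} (\<lambda>x::real. x * ln x)"
proof -
  have lim: "((\<lambda>x::real. x * ln x) \<longlongrightarrow> 0) (at_right 0)" by real_asymp
  show ?thesis
  unfolding continuous_on_eq_continuous_within
  proof
    fix x :: real assume x: "x \<in> {0..}"
    show "continuous (at x within {0..}) (\<lambda>x. x * ln x)"
    proof (cases "x = 0")
      case True
      have "at (0::real) within {0..} = at_right 0" by (rule at_within_Ici_at_right)
      then show ?thesis using True lim by (simp add: continuous_within)
    next
      case False
      then have "x > 0" using x by auto
      then show ?thesis by (auto intro!: continuous_intros)
    qed
  qed
qed

lemma xlna_cont: assumes "a > 0" shows "continuous_on {0..} (\<lambda>x::real. x * ln (x / a))"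
proof -
  have "continuous_on {0..} (\<lambda>x::real. x * ln x - x * ln a)"
    by (intro continuous_intros xlnx_cont)
  then show ?thesis
    by (rule continuous_on_cong[THEN iffD1, rotated 2]) (use assms in \<open>auto simp: ln_div right_diff_distrib\<close>)
qed

definition affS :: "(nat \<Rightarrow> 'b \<Rightarrow> real) \<Rightarrow> nat set \<Rightarrow> ('b \<Rightarrow> real) set" where
  "affS P I = {Q. \<exists>l. sum l I = 1 \<and> Q = comb P I l}"

lemma affS_comb:
  assumes "Q \<in> affS P I" "R \<in> affS P I" "u + v = 1"
  shows "(\<lambda>j. u * Q j + v * R j) \<in> affS P I"
proof -
  obtain l where l: "sum l I = 1" "Q = comb P I l" using assms(1) by (auto simp: affS_def)
  obtain m where m: "sum m I = 1" "R = comb P I m" using assms(2) by (auto simp: affS_def)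
  have "sum (\<lambda>i. u * l i + v * m i) I = 1" using l m assms(3) by (simp add: sum.distrib sum_distrib_left[symmetric])
  moreover have "(\<lambda>j. u * Q j + v * R j) = comb P I (\<lambda>i. u * l i + v * m i)"
    using l m by (auto simp: comb_def sum.distrib sum_distrib_left algebra_simps)
  ultimately show ?thesis unfolding affS_def by blast
qed

lemma aff_L_iff: "Q \<in> aff_L P I \<longleftrightarrow> Q \<in> affS P I \<and> Q \<in> open_simplex"
  by (auto simp: aff_L_def affS_def)

lemma row_in_affS: assumes "i0 \<in> I" "finite I" shows "P i0 \<in> affS P I"
proof -
  have "sum (\<lambda>i. if i = i0 then 1 else 0) I = (1::real)" using assms by simp
  moreover have "P i0 = comb P I (\<lambda>i. if i = i0 then 1 else 0)"
  proof
    fix j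
    have "comb P I (\<lambda>i. if i = i0 then 1 else 0) j = (\<Sum>i\<in>I. if i = i0 then P i j else 0)"
      unfolding comb_def by (intro sum.cong) auto
    then show "P i0 j = comb P I (\<lambda>i. if i = i0 then 1 else 0) j" using assms by simp
  qed
  ultimately show ?thesis unfolding affS_def by blast
qed

lemma vnl[simp]: "($) (vec_lambda f) = f" by (rule ext) simp

lemma exists_min:
  fixes P :: "nat \<Rightarrow> 'b::finite \<Rightarrow> real"
  assumes I: "finite I" "i0 \<in> I" and rows: "\<forall>i\<in>I. P i \<in> open_simplex"
    and Q': "Q' \<in> open_simplex"
  shows "\<exists>Q. (\<forall>j. Q j \<ge> 0) \<and> Q \<in> affS P I \<and>
            (\<forall>R. (\<forall>j. R j \<ge> 0) \<and> R \<in> affS P I \<longrightarrow> KL Q Q' \<le> KL R Q')"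
proof -
  define K where "K = {x::real^'b. (\<forall>j. 0 \<le> x$j) \<and> (\<lambda>j. x$j) \<in> affS P I}"
  have aff: "affine {x::real^'b. (\<lambda>j. x$j) \<in> affS P I}"
    unfolding affine_def
  proof (intro allI impI ballI)
    fix x y :: "real^'b" and u v :: real
    assume "x \<in> {x. (\<lambda>j. x$j) \<in> affS P I}" "y \<in> {x. (\<lambda>j. x$j) \<in> affS P I}" "u + v = 1"
    then have "(\<lambda>j. u * x$j + v * y$j) \<in> affS P I" using affS_comb by auto
    moreover have "(($) (u *\<^sub>R x + v *\<^sub>R y)) = (\<lambda>j. u * x$j + v * y$j)" by (rule ext) simp
    ultimately show "u *\<^sub>R x + v *\<^sub>R y \<in> {x. (\<lambda>j. x$j) \<in> affS P I}" by (simp only: mem_Collect_eq)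
  qed
  have cl: "closed K"
  proof -
    have "closed {x::real^'b. \<forall>j. 0 \<le> x$j}"
      by (intro closed_Collect_all closed_Collect_le continuous_intros)
    moreover have "K = {x::real^'b. \<forall>j. 0 \<le> x$j} \<inter> {x::real^'b. (\<lambda>j. x$j) \<in> affS P I}"
      by (auto simp: K_def)
    ultimately show ?thesis using affine_closed[OF aff] by auto
  qed
  have sub: "K \<subseteq> cbox 0 1"
  proof
    fix x assume x: "x \<in> K"
    have "\<forall>j. x$j \<le> 1"
    proof
      fix j
      obtain l where l: "sum l I = 1" "(\<lambda>j. x$j) = comb P I l" using x by (auto simp: K_def affS_def)
      have "(\<Sum>j\<in>UNIV. x$j) = 1" using comb_sum[OF rows, of l] l by (metis (mono_tags))
      moreover have "x$j \<le> (\<Sum>j\<in>UNIV. x$j)" by (rule member_le_sum) (use x in \<open>auto simp: K_def\<close>)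
      ultimately show "x$j \<le> 1" by simp
    qed
    then show "x \<in> cbox 0 1" using x by (auto simp: mem_box_cart K_def)
  qed
  have cpt: "compact K"
  proof -
    have "compact (cbox 0 1 \<inter> K)" using cl by (intro compact_Int_closed) auto
    moreover have "cbox 0 1 \<inter> K = K" using sub by auto
    ultimately show ?thesis by simp
  qed
  have ne: "(\<chi> j. P i0 j) \<in> K"
    using row_in_affS[OF I(2,1), of P] rows I os_pos[of "P i0"] by (auto simp: K_def less_imp_le)
  have cont: "continuous_on K (\<lambda>x. KL (\<lambda>j. x$j) Q')"
    unfolding KL_def
  proof (intro continuous_on_sum)
    fix j :: 'b
    show "continuous_on K (\<lambda>x. x $ j * ln (x $ j / Q' j))"
      by (rule continuous_on_compose2[OF xlna_cont[OF os_pos[OF Q']]])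
         (auto intro!: continuous_intros simp: K_def)
  qed
  obtain x where x: "x \<in> K" "\<forall>y\<in>K. KL (\<lambda>j. x$j) Q' \<le> KL (\<lambda>j. y$j) Q'"
    using continuous_attains_inf[OF cpt _ cont] ne by blast
  show ?thesis
  proof (intro exI[of _ "\<lambda>j. x$j"] conjI allI impI)
    show "\<And>j. 0 \<le> x $ j" "(\<lambda>j. x$j) \<in> affS P I" using x by (auto simp: K_def)
    fix R :: "'b \<Rightarrow> real" assume R: "(\<forall>j. 0 \<le> R j) \<and> R \<in> affS P I"
    then have "(\<chi> j. R j) \<in> K" by (auto simp: K_def)
    then show "KL (\<lambda>j. x$j) Q' \<le> KL R Q'" using x(2) by fastforce
  qed
qed



lemma cvx:
  fixes x y a t :: real
  assumes "0 < x" "0 < y" "0 < a" "0 < t" "t < 1"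
  shows "((1-t)*x + t*y) * ln (((1-t)*x + t*y) / a) \<le> (1-t)*(x * ln (x / a)) + t*(y * ln (y / a))"
proof -
  define m where "m = (1-t)*x + t*y"
  have m: "m > 0" using assms unfolding m_def by (simp add: add_pos_pos)
  have h1: "(1-t)*(x*(ln x - ln m)) \<ge> (1-t)*(x - m)"
    using xlog_ge[OF assms(1) m] assms by (intro mult_left_mono) auto
  have h2: "t*(y*(ln y - ln m)) \<ge> t*(y - m)"
    using xlog_ge[OF assms(2) m] assms by (intro mult_left_mono) auto
  have e: "(1-t)*(x - m) + t*(y - m) = 0" unfolding m_def by (simp add: algebra_simps)
  have "(1-t)*(x * ln (x / a)) + t*(y * ln (y / a)) - m * ln (m / a)
        = (1-t)*(x*(ln x - ln m)) + t*(y*(ln y - ln m))"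
    using assms m by (simp add: ln_div m_def algebra_simps)
  then show ?thesis using h1 h2 e unfolding m_def[symmetric] by linarith
qed

lemma min_pos:
  fixes P :: "nat \<Rightarrow> 'b::finite \<Rightarrow> real"
  assumes I: "finite I" "i0 \<in> I" and rows: "\<forall>i\<in>I. P i \<in> open_simplex"
    and Q': "Q' \<in> open_simplex"
    and Q: "\<forall>j. Q j \<ge> 0" "Q \<in> affS P I"
    and mn: "\<forall>R. (\<forall>j. R j \<ge> 0) \<and> R \<in> affS P I \<longrightarrow> KL Q Q' \<le> KL R Q'"
  shows "\<forall>j. Q j > 0"
proof (rule ccontr)
  assume "\<not> (\<forall>j. Q j > 0)"
  then obtain j0 where j0: "Q j0 = 0" using Q(1) by (metis less_eq_real_def)
  define R where "R = P i0"
  have Rpos: "\<And>j. R j > 0" using rows I os_pos unfolding R_def by blast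
  have RA: "R \<in> affS P I" unfolding R_def using row_in_affS I by blast
  define s where "s = (\<Sum>j\<in>UNIV. if Q j = 0 then R j else 0)"
  have "R j0 \<le> s" unfolding s_def
    using member_le_sum[of j0 UNIV "\<lambda>j. if Q j = 0 then R j else 0"] j0 Rpos
    by (simp add: less_imp_le)
  then have s: "s > 0" using Rpos[of j0] by linarith
  define C where "C = KL R Q' - KL Q Q'"
  define t where "t = exp (- (\<bar>C\<bar> + 1) / s)"
  have t0: "t > 0" unfolding t_def by simp
  have t1: "t < 1" unfolding t_def using s by (simp add: field_simps)
  have lnt: "ln t * s = - (\<bar>C\<bar> + 1)" unfolding t_def using s by simp
  define Qt where "Qt = (\<lambda>j. (1-t) * Q j + t * R j)"
  have QtA: "Qt \<in> affS P I" unfolding Qt_def using affS_comb[OF Q(2) RA] by simp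
  have Qt0: "\<forall>j. Qt j \<ge> 0" unfolding Qt_def using Q(1) Rpos t1 t0
    by (simp add: add_nonneg_nonneg less_imp_le)
  have ge: "KL Q Q' \<le> KL Qt Q'" using mn QtA Qt0 by blast
  have a: "\<And>j. Q' j > 0" using Q' os_pos by blast
  have pc: "Qt j * ln (Qt j / Q' j) \<le> Q j * ln (Q j / Q' j)
              + t * (R j * ln (R j / Q' j) - Q j * ln (Q j / Q' j))
              + t * ln t * (if Q j = 0 then R j else 0)" for j
  proof (cases "Q j = 0")
    case True
    then have "Qt j = t * R j" unfolding Qt_def by simp
    then have "Qt j * ln (Qt j / Q' j) = t * (R j * ln (R j / Q' j)) + t * ln t * R j"
      using t0 Rpos[of j] a[of j] by (simp add: ln_div ln_mult algebra_simps)
    then show ?thesis using True by simp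
  next
    case False
    then have "Q j > 0" using Q(1) by (metis less_eq_real_def)
    then have "Qt j * ln (Qt j / Q' j) \<le> (1-t)*(Q j * ln (Q j / Q' j)) + t*(R j * ln (R j / Q' j))"
      unfolding Qt_def using cvx[OF _ Rpos a t0 t1] by blast
    then show ?thesis using False by (simp add: algebra_simps)
  qed
  have "KL Qt Q' \<le> (\<Sum>j\<in>UNIV. Q j * ln (Q j / Q' j)
              + t * (R j * ln (R j / Q' j) - Q j * ln (Q j / Q' j))
              + t * ln t * (if Q j = 0 then R j else 0))"
    unfolding KL_def by (rule sum_mono) (rule pc)
  also have "\<dots> = KL Q Q' + t * C + t * ln t * s"
    unfolding KL_def C_def s_def
    by (simp add: sum.distrib sum_distrib_left[symmetric] sum_subtractf)
  also have "\<dots> = KL Q Q' + t * (C - (\<bar>C\<bar> + 1))"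
  proof -
    have "t * ln t * s = t * (- (\<bar>C\<bar> + 1))" using lnt by (simp add: mult.assoc)
    then show ?thesis by (simp add: algebra_simps)
  qed
  also have "\<dots> < KL Q Q'"
    using t0 by (simp add: mult_pos_neg)
  finally show False using ge by simp
qed



lemma min_orth:
  fixes P :: "nat \<Rightarrow> 'b::finite \<Rightarrow> real"
  assumes I: "finite I" and rows: "\<forall>i\<in>I. P i \<in> open_simplex"
    and Q': "Q' \<in> open_simplex" and QL: "Q \<in> aff_L P I"
    and mn: "\<forall>R\<in>aff_L P I. KL Q Q' \<le> KL R Q'"
    and ik: "i \<in> I" "k \<in> I"
  shows "(\<Sum>j\<in>UNIV. (P i j - P k j) * (ln (Q j) - ln (Q' j))) = 0"
proof (rule ccontr)
  define d where "d j = P i j - P k j" for j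
  define w where "w j = ln (Q j) - ln (Q' j)" for j
  define g where "g = (\<Sum>j\<in>UNIV. d j * w j)"
  define M where "M = (\<Sum>j\<in>UNIV. (d j)^2 / Q j)"
  assume "(\<Sum>j\<in>UNIV. (P i j - P k j) * (ln (Q j) - ln (Q' j))) \<noteq> 0"
  then have g: "g \<noteq> 0" unfolding g_def d_def w_def by simp
  have Qos: "Q \<in> open_simplex" using QL aff_L_iff by blast
  have Qp: "\<And>j. Q j > 0" using Qos os_pos by blast
  have Mnn: "M \<ge> 0" unfolding M_def using Qp by (intro sum_nonneg divide_nonneg_pos) auto
  define m where "m = Min (range Q)"
  have mpos: "m > 0" unfolding m_def using Qp by (subst Min_gr_iff) auto
  have mle: "\<And>j. m \<le> Q j" unfolding m_def by (rule Min_le) auto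
  define \<delta> where "\<delta> = min (1/(2*(M+1))) (m/(2*(\<bar>g\<bar>+1)))"
  have dpos: "\<delta> > 0" unfolding \<delta>_def using Mnn mpos by simp
  define s where "s = - g * \<delta>"
  have dle: "\<And>j. \<bar>d j\<bar> \<le> 1"
  proof -
    fix j
    have "0 < P i j" "P i j \<le> 1" "0 < P k j" "P k j \<le> 1"
      using rows ik os_pos os_le1 by blast+
    then show "\<bar>d j\<bar> \<le> 1" unfolding d_def by linarith
  qed
  have sbound: "\<bar>s\<bar> < m"
  proof -
    have "\<bar>s\<bar> = \<bar>g\<bar> * \<delta>" unfolding s_def using dpos by (simp add: abs_mult)
    also have "\<dots> \<le> \<bar>g\<bar> * (m/(2*(\<bar>g\<bar>+1)))" unfolding \<delta>_def by (intro mult_left_mono) auto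
    also have "\<dots> < m" using mpos by (simp add: field_simps add_nonneg_pos)
    finally show ?thesis .
  qed
  define Qs where "Qs j = Q j + s * d j" for j
  have Qsp: "\<And>j. Qs j > 0"
  proof -
    fix j
    have "\<bar>s * d j\<bar> \<le> \<bar>s\<bar>" using dle[of j] by (simp add: abs_mult mult_left_le)
    then show "Qs j > 0" unfolding Qs_def using sbound mle[of j] by linarith
  qed
  obtain l where l: "sum l I = 1" "Q = comb P I l" using QL by (auto simp: aff_L_def)
  define l' where "l' x = l x + s * ((if x = i then 1 else 0) - (if x = k then 1 else 0))" for x
  have "sum l' I = 1" unfolding l'_def using l I ik
    by (simp add: sum.distrib sum_distrib_left[symmetric] sum_subtractf)
  moreover have "Qs = comb P I l'"
  proof
    fix j
    have "comb P I l' j = comb P I l j + s * ((\<Sum>x\<in>I. if x = i then P x j else 0) - (\<Sum>x\<in>I. if x = k then P x j else 0))"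
    proof -
      have "\<And>x. l' x * P x j = l x * P x j + s * ((if x = i then P x j else 0) - (if x = k then P x j else 0))"
        unfolding l'_def by (simp add: algebra_simps)
      then show ?thesis unfolding comb_def
        by (simp add: sum.distrib sum_distrib_left[symmetric] sum_subtractf[symmetric])
    qed
    also have "\<dots> = Qs j" using I ik l unfolding Qs_def d_def by simp
    finally show "Qs j = comb P I l' j" by simp
  qed
  ultimately have QsA: "Qs \<in> affS P I" unfolding affS_def by blast
  have "(\<Sum>j\<in>UNIV. Qs j) = 1"
    using comb_sum[OF rows, of l'] \<open>sum l' I = 1\<close> \<open>Qs = comb P I l'\<close> by simp
  then have QsL: "Qs \<in> aff_L P I" using QsA Qsp aff_L_iff open_simplex_def by blast
  have a: "\<And>j. Q' j > 0" using Q' os_pos by blast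
  have sumd: "(\<Sum>j\<in>UNIV. d j) = 0"
    unfolding d_def using rows ik by (simp add: sum_subtractf os_sum)
  have pc: "Qs j * (ln (Qs j) - ln (Q' j)) - Q j * (ln (Q j) - ln (Q' j))
            \<le> s * d j + s^2 * ((d j)^2 / Q j) + s * (d j * w j)" for j
  proof -
    have "Qs j * (ln (Qs j) - ln (Q' j)) - Q j * (ln (Q j) - ln (Q' j))
          = Qs j * (ln (Qs j) - ln (Q j)) + s * (d j * w j)"
      unfolding Qs_def w_def by (simp add: algebra_simps)
    also have "\<dots> \<le> (Qs j - Q j) + (Qs j - Q j)^2 / Q j + s * (d j * w j)"
      using xlog_le[OF Qsp Qp, of j j] by simp
    also have "\<dots> = s * d j + s^2 * ((d j)^2 / Q j) + s * (d j * w j)"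
      unfolding Qs_def by (simp add: power_mult_distrib)
    finally show ?thesis .
  qed
  have "KL Qs Q' - KL Q Q' = (\<Sum>j\<in>UNIV. Qs j * (ln (Qs j) - ln (Q' j)) - Q j * (ln (Q j) - ln (Q' j)))"
    using Qsp Qp a by (simp add: KL_alt sum_subtractf)
  also have "\<dots> \<le> (\<Sum>j\<in>UNIV. s * d j + s^2 * ((d j)^2 / Q j) + s * (d j * w j))"
    by (rule sum_mono) (rule pc)
  also have "\<dots> = s * g + s^2 * M"
    unfolding g_def M_def using sumd
    by (simp add: sum.distrib sum_distrib_left[symmetric] times_divide_eq_right[symmetric] del: times_divide_eq_right)
  also have "\<dots> = g^2 * \<delta> * (\<delta> * M - 1)" unfolding s_def by (simp add: power2_eq_square algebra_simps)
  also have "\<dots> < 0"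
  proof -
    have "\<delta> \<le> 1/(2*(M+1))" unfolding \<delta>_def by simp
    then have "\<delta> * M \<le> 1/(2*(M+1)) * M" using Mnn by (rule mult_right_mono)
    then have "\<delta> * M \<le> M / (2*(M+1))" by simp
    also have "\<dots> < 1" using Mnn by (simp add: field_simps)
    finally have "\<delta> * M - 1 < 0" by simp
    moreover have "g^2 * \<delta> > 0" using g dpos by simp
    ultimately show ?thesis by (simp add: mult_pos_neg)
  qed
  finally have "KL Qs Q' < KL Q Q'" by simp
  then show False using mn QsL by fastforce
qed

lemma proj_char:
  fixes P :: "nat \<Rightarrow> 'b::finite \<Rightarrow> real"
  assumes I: "finite I" "i0 \<in> I" and rows: "\<forall>i\<in>I. P i \<in> open_simplex"
    and Q': "Q' \<in> open_simplex"
  shows "proj Q' (aff_L P I) \<in> aff_L P I \<and>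
         (\<forall>i\<in>I. KL (P i) Q' - KL (P i) (proj Q' (aff_L P I)) = KL (proj Q' (aff_L P I)) Q')"
proof -
  obtain Q where Q: "\<forall>j. Q j \<ge> 0" "Q \<in> affS P I"
     and mn: "\<forall>R. (\<forall>j. R j \<ge> 0) \<and> R \<in> affS P I \<longrightarrow> KL Q Q' \<le> KL R Q'"
    using exists_min[OF I rows Q'] by blast
  have Qp: "\<forall>j. Q j > 0" using min_pos[OF I rows Q' Q mn] .
  obtain l where l: "sum l I = 1" "Q = comb P I l" using Q(2) by (auto simp: affS_def)
  have "(\<Sum>j\<in>UNIV. Q j) = 1" using comb_sum[OF rows, of l] l by simp
  then have QL: "Q \<in> aff_L P I" using Q(2) Qp aff_L_iff open_simplex_def by blast
  have mnL: "\<forall>R\<in>aff_L P I. KL Q Q' \<le> KL R Q'"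
  proof
    fix R assume R: "R \<in> aff_L P I"
    then have "R \<in> affS P I" "\<forall>j. R j \<ge> 0" using aff_L_iff os_pos less_imp_le by blast+
    then show "KL Q Q' \<le> KL R Q'" using mn by blast
  qed
  define w where "w j = ln (Q j) - ln (Q' j)" for j
  define c where "c = (\<Sum>j\<in>UNIV. P i0 j * w j)"
  have orth: "\<forall>k\<in>I. (\<Sum>j\<in>UNIV. P k j * w j) = c"
  proof
    fix k assume k: "k \<in> I"
    have "(\<Sum>j\<in>UNIV. (P k j - P i0 j) * w j) = 0"
      using min_orth[OF I(1) rows Q' QL mnL k I(2)] unfolding w_def .
    then show "(\<Sum>j\<in>UNIV. P k j * w j) = c"
      unfolding c_def by (simp add: left_diff_distrib sum_subtractf)
  qed
  have a: "\<forall>j. Q' j > 0" using Q' os_pos by blast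
  have KQ: "KL Q Q' = c"
    using KL_alt[OF Qp a] comb_lin[OF orth l(1)] l(2) unfolding w_def by simp
  have pyth: "KL R Q' = KL R Q + c" if R: "R \<in> aff_L P I" for R
  proof -
    obtain m where m: "sum m I = 1" "R = comb P I m" using R by (auto simp: aff_L_def)
    have Rp: "\<forall>j. R j > 0" using R aff_L_iff os_pos by blast
    have "KL R Q' - KL R Q = (\<Sum>j\<in>UNIV. R j * w j)"
      using KL_diff[OF Rp a Qp] unfolding w_def by simp
    also have "\<dots> = c" using comb_lin[OF orth m(1)] m(2) by simp
    finally show ?thesis by simp
  qed
  have uniq: "R = Q" if "R \<in> aff_L P I \<and> (\<forall>R'\<in>aff_L P I. KL R Q' \<le> KL R' Q')" for R
  proof -
    have "KL R Q' \<le> KL Q Q'" using that QL by blast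
    then have "KL R Q \<le> 0" using pyth[of R] that KQ by simp
    then show ?thesis using gibbs_eq that QL aff_L_iff by blast
  qed
  have pq: "proj Q' (aff_L P I) = Q"
    unfolding proj_def
  proof (rule the_equality)
    show "Q \<in> aff_L P I \<and> (\<forall>R\<in>aff_L P I. KL Q Q' \<le> KL R Q')" using QL mnL by blast
  next
    fix R assume "R \<in> aff_L P I \<and> (\<forall>R'\<in>aff_L P I. KL R Q' \<le> KL R' Q')"
    then show "R = Q" by (rule uniq)
  qed
  show ?thesis
  proof (simp only: pq, intro conjI ballI QL)
    fix i assume i: "i \<in> I"
    have Pp: "\<forall>j. P i j > 0" using rows i os_pos by blast
    have "KL (P i) Q' - KL (P i) Q = (\<Sum>j\<in>UNIV. P i j * w j)"
      using KL_diff[OF Pp a Qp] unfolding w_def by simp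
    then show "KL (P i) Q' - KL (P i) Q = KL Q Q'" using orth i KQ by simp
  qed
qed



lemma gp3:
  assumes gp: "general_position P 4"
    and h: "\<forall>j. a * (P 2 j - P 1 j) + b * (P 3 j - P 1 j) + c * (P 4 j - P 1 j) = 0"
  shows "a = 0 \<and> b = 0 \<and> c = 0"
proof -
  define f :: "nat \<Rightarrow> real" where "f i = (if i = 2 then a else if i = 3 then b else c)" for i
  have e: "{2..4::nat} = {2,3,4}" by auto
  have "\<forall>j. (\<Sum>i\<in>{2..4}. f i * (P i j - P 1 j)) = 0" using h by (simp add: e f_def add.assoc)
  then have "\<forall>i\<in>{2..4}. f i = 0" using gp unfolding general_position_def by blast
  then show ?thesis by (simp add: e f_def)
qed

lemma e14: "{1..4::nat} = {1,2,3,4}" by auto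

lemma bary_eq:
  fixes P :: "nat \<Rightarrow> 'b::finite \<Rightarrow> real"
  assumes gp: "general_position P 4"
    and l: "\<forall>i. i \<notin> {1..4} \<longrightarrow> l i = 0" "sum l {1..4} = 1" "Q = comb P {1..4} l"
  shows "bary P {1..4} Q = l"
  unfolding bary_def
proof (rule the_equality)
  show "(\<forall>i. i \<notin> {1..4} \<longrightarrow> l i = 0) \<and> sum l {1..4} = 1 \<and> Q = comb P {1..4} l" using l by blast
next
  fix m assume m: "(\<forall>i. i \<notin> {1..4} \<longrightarrow> m i = 0) \<and> sum m {1..4} = 1 \<and> Q = comb P {1..4} m"
  define c where "c i = m i - l i" for i
  have "sum m {1..4} = 1" "sum l {1..4} = 1" using m l by auto
  then have s: "c 1 + c 2 + c 3 + c 4 = 0" unfolding c_def e14 by simp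
  have zz: "\<forall>j. c 1 * P 1 j + c 2 * P 2 j + c 3 * P 3 j + c 4 * P 4 j = 0"
  proof
    fix j
    have "comb P {1..4} m j = comb P {1..4} l j" using m l by simp
    then show "c 1 * P 1 j + c 2 * P 2 j + c 3 * P 3 j + c 4 * P 4 j = 0"
      unfolding c_def comb_def e14 by (simp add: algebra_simps)
  qed
  have "\<forall>j. c 2 * (P 2 j - P 1 j) + c 3 * (P 3 j - P 1 j) + c 4 * (P 4 j - P 1 j) = 0"
  proof
    fix j
    have z: "c 1 * P 1 j + c 2 * P 2 j + c 3 * P 3 j + c 4 * P 4 j = 0" using zz by blast
    have "c 2 * (P 2 j - P 1 j) + c 3 * (P 3 j - P 1 j) + c 4 * (P 4 j - P 1 j)
        = (c 1 * P 1 j + c 2 * P 2 j + c 3 * P 3 j + c 4 * P 4 j) - (c 1 + c 2 + c 3 + c 4) * P 1 j"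
      by (simp add: algebra_simps)
    then show "c 2 * (P 2 j - P 1 j) + c 3 * (P 3 j - P 1 j) + c 4 * (P 4 j - P 1 j) = 0"
      using z s by simp
  qed
  then have "c 2 = 0 \<and> c 3 = 0 \<and> c 4 = 0" using gp3[OF gp] by blast
  then have "c 1 = 0" using s by simp
  have "\<forall>i\<in>{1..4}. c i = 0" using \<open>c 1 = 0\<close> \<open>c 2 = 0 \<and> c 3 = 0 \<and> c 4 = 0\<close> unfolding e14 by auto
  then show "m = l" using m l unfolding c_def by (metis eq_iff_diff_eq_0 ext)
qed



lemma KL_self: "KL Q Q = 0" unfolding KL_def by (intro sum.neutral) auto

lemma mix_KL:
  fixes P :: "nat \<Rightarrow> 'b::finite \<Rightarrow> real"
  assumes rows: "\<forall>i\<in>I. P i \<in> open_simplex" and R: "R \<in> open_simplex" and S: "S \<in> open_simplex"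
    and S_eq: "S = comb P I l"
  shows "(\<Sum>i\<in>I. l i * (KL (P i) R - KL (P i) S)) = KL S R"
proof -
  have "(\<Sum>i\<in>I. l i * (KL (P i) R - KL (P i) S)) = (\<Sum>j\<in>UNIV. S j * (ln (S j) - ln (R j)))"
    using mix[of I P R S l] rows R S os_pos S_eq by blast
  also have "\<dots> = KL S R" using KL_alt R S os_pos by metis
  finally show ?thesis .
qed

lemma equi_unique:
  fixes P :: "nat \<Rightarrow> 'b::finite \<Rightarrow> real"
  assumes rows: "\<forall>i\<in>I. P i \<in> open_simplex"
    and R: "R \<in> aff_L P I" and R': "R' \<in> aff_L P I"
    and r: "\<forall>i\<in>I. KL (P i) R = r" and r': "\<forall>i\<in>I. KL (P i) R' = r'"
  shows "R = R'"
proof -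
  obtain l where l: "sum l I = 1" "R = comb P I l" using R by (auto simp: aff_L_def)
  obtain m where m: "sum m I = 1" "R' = comb P I m" using R' by (auto simp: aff_L_def)
  have Ro: "R \<in> open_simplex" "R' \<in> open_simplex" using R R' aff_L_iff by blast+
  have "(\<Sum>i\<in>I. l i * (KL (P i) R' - KL (P i) R)) = KL R R'" using mix_KL[OF rows Ro(2) Ro(1) l(2)] .
  moreover have "(\<Sum>i\<in>I. l i * (KL (P i) R' - KL (P i) R)) = r' - r"
    using r r' l(1) by (simp add: sum_distrib_right[symmetric])
  moreover have "(\<Sum>i\<in>I. m i * (KL (P i) R - KL (P i) R')) = KL R' R" using mix_KL[OF rows Ro(1) Ro(2) m(2)] .
  moreover have "(\<Sum>i\<in>I. m i * (KL (P i) R - KL (P i) R')) = r - r'"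
    using r r' m(1) by (simp add: sum_distrib_right[symmetric])
  ultimately have "KL R R' + KL R' R = 0" by simp
  moreover have "KL R R' \<ge> 0" "KL R' R \<ge> 0" using gibbs Ro by blast+
  ultimately have "KL R R' \<le> 0" by simp
  then show ?thesis using gibbs_eq Ro by blast
qed

lemma exists_Qp:
  fixes P :: "nat \<Rightarrow> 'b::finite \<Rightarrow> real"
  assumes rows: "\<forall>i\<in>{1..4}. P i \<in> open_simplex" and gp: "general_position P 4"
  shows "\<exists>Q'\<in>open_simplex. \<forall>i\<in>{1..4}. KL (P i) Q' = KL (P 1) Q'"
proof -
  define H where "H i = (\<Sum>j\<in>UNIV. P i j * ln (P i j))" for i
  define d where "d i j = P i j - P 1 j" for i j
  define vv where "vv x j = fst x * d 2 j + fst (snd x) * d 3 j + snd (snd x) * d 4 j"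
    for x :: "real \<times> real \<times> real" and j
  define g where "g x = ((\<Sum>j\<in>UNIV. d 2 j * vv x j), (\<Sum>j\<in>UNIV. d 3 j * vv x j), (\<Sum>j\<in>UNIV. d 4 j * vv x j))"
    for x :: "real \<times> real \<times> real"
  have lin: "linear g"
  proof (rule linearI)
    fix x y :: "real \<times> real \<times> real"
    show "g (x + y) = g x + g y"
      unfolding g_def vv_def by (simp add: algebra_simps sum.distrib)
  next
    fix r :: real and x :: "real \<times> real \<times> real"
    show "g (r *\<^sub>R x) = r *\<^sub>R g x"
      unfolding g_def vv_def by (simp add: algebra_simps sum_distrib_left)
  qed
  have inj: "inj g"
    unfolding linear_injective_0[OF lin]
  proof (intro allI impI)
    fix x :: "real \<times> real \<times> real" assume gx: "g x = 0"
    have "(\<Sum>j\<in>UNIV. (vv x j)^2) = fst x * (\<Sum>j\<in>UNIV. d 2 j * vv x j)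
            + fst (snd x) * (\<Sum>j\<in>UNIV. d 3 j * vv x j) + snd (snd x) * (\<Sum>j\<in>UNIV. d 4 j * vv x j)"
      unfolding sum_distrib_left sum.distrib[symmetric]
      by (rule sum.cong) (simp_all add: vv_def power2_eq_square algebra_simps)
    also have "\<dots> = 0" using gx unfolding g_def by (simp add: zero_prod_def)
    finally have "(\<Sum>j\<in>UNIV. (vv x j)^2) = 0" .
    then have "\<forall>j. vv x j = 0" using sum_nonneg_eq_0_iff[of UNIV "\<lambda>j. (vv x j)^2"] by simp
    then have "fst x = 0 \<and> fst (snd x) = 0 \<and> snd (snd x) = 0"
      using gp3[OF gp] unfolding vv_def d_def by blast
    then show "x = 0" by (simp add: prod_eq_iff zero_prod_def)
  qed
  have "surj g" by (rule linear_inj_imp_surj[OF lin inj])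
  then obtain x where x: "g x = (H 2 - H 1, H 3 - H 1, H 4 - H 1)" by (metis surjD)
  define v where "v = vv x"
  define Z where "Z = (\<Sum>j\<in>UNIV. exp (v j))"
  have Z: "Z > 0" unfolding Z_def by (intro sum_pos) auto
  define Q' where "Q' j = exp (v j) / Z" for j
  have Qo: "Q' \<in> open_simplex" unfolding open_simplex_def Q'_def using Z
    by (simp add: sum_divide_distrib[symmetric] Z_def[symmetric])
  have lnQ: "ln (Q' j) = v j - ln Z" for j unfolding Q'_def using Z by (simp add: ln_div)
  have sd: "(\<Sum>j\<in>UNIV. d i j) = 0" if "i \<in> {1..4}" for i
    unfolding d_def using rows that by (simp add: sum_subtractf os_sum)
  have lin_eq: "(\<Sum>j\<in>UNIV. d i j * ln (Q' j)) = H i - H 1" if "i \<in> {2,3,4}" for i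
  proof -
    have "(\<Sum>j\<in>UNIV. d i j * ln (Q' j)) = (\<Sum>j\<in>UNIV. d i j * v j) - ln Z * (\<Sum>j\<in>UNIV. d i j)"
      unfolding lnQ by (simp add: algebra_simps sum_subtractf sum_distrib_left)
    also have "(\<Sum>j\<in>UNIV. d i j) = 0" using sd that by auto
    finally show ?thesis using x that unfolding g_def v_def by auto
  qed
  have "KL (P i) Q' = KL (P 1) Q'" if i: "i \<in> {1..4}" for i
  proof -
    have "P i \<in> open_simplex" "P 1 \<in> open_simplex" using rows i by auto
    then have Pp: "\<forall>j. P i j > 0" "\<forall>j. P 1 j > 0" using os_pos by auto
    have Qp: "\<forall>j. Q' j > 0" using Qo os_pos by blast
    have k: "KL (P k) Q' = H k - (\<Sum>j\<in>UNIV. P k j * ln (Q' j))" if "\<forall>j. P k j > 0" for k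
      using KL_alt[OF that Qp] unfolding H_def by (simp add: algebra_simps sum_subtractf)
    have "i = 1 \<or> i \<in> {2,3,4}" using i by auto
    then show ?thesis
    proof
      assume "i \<in> {2,3,4}"
      then have "(\<Sum>j\<in>UNIV. (P i j - P 1 j) * ln (Q' j)) = H i - H 1" using lin_eq d_def by simp
      then have "(\<Sum>j\<in>UNIV. P i j * ln (Q' j)) - (\<Sum>j\<in>UNIV. P 1 j * ln (Q' j)) = H i - H 1"
        by (simp add: left_diff_distrib sum_subtractf)
      then show ?thesis using k Pp by simp
    qed simp
  qed
  then show ?thesis using Qo by blast
qed

lemma equi_char:
  fixes P :: "nat \<Rightarrow> 'b::finite \<Rightarrow> real"
  assumes rows: "\<forall>i\<in>{1..4}. P i \<in> open_simplex" and gp: "general_position P 4"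
  shows "equidistant P {1..4} \<in> aff_L P {1..4} \<and>
         (\<forall>i\<in>{1..4}. KL (P i) (equidistant P {1..4}) = KL (P 1) (equidistant P {1..4}))"
proof -
  obtain Q' where Q': "Q' \<in> open_simplex" "\<forall>i\<in>{1..4}. KL (P i) Q' = KL (P 1) Q'"
    using exists_Qp[OF rows gp] by blast
  define Q0 where "Q0 = proj Q' (aff_L P {1..4})"
  have pc: "Q0 \<in> aff_L P {1..4} \<and> (\<forall>i\<in>{1..4}. KL (P i) Q' - KL (P i) Q0 = KL Q0 Q')"
    unfolding Q0_def by (rule proj_char[of "{1..4}" 1 P Q', OF _ _ rows Q'(1)]) auto
  have eq: "\<forall>i\<in>{1..4}. KL (P i) Q0 = KL (P 1) Q' - KL Q0 Q'"
  proof
    fix i assume i: "i \<in> {1..4::nat}"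
    have "KL (P i) Q' - KL (P i) Q0 = KL Q0 Q'" "KL (P i) Q' = KL (P 1) Q'" using pc Q'(2) i by blast+
    then show "KL (P i) Q0 = KL (P 1) Q' - KL Q0 Q'" by linarith
  qed
  have "equidistant P {1..4} = Q0"
    unfolding equidistant_def
  proof (rule the_equality)
    show "Q0 \<in> aff_L P {1..4} \<and> (\<forall>i\<in>{1..4}. \<forall>k\<in>{1..4}. KL (P i) Q0 = KL (P k) Q0)"
    proof (intro conjI ballI)
      show "Q0 \<in> aff_L P {1..4}" using pc by blast
      fix i k assume "i \<in> {1..4::nat}" "k \<in> {1..4::nat}"
      then have "KL (P i) Q0 = KL (P 1) Q' - KL Q0 Q'" "KL (P k) Q0 = KL (P 1) Q' - KL Q0 Q'"
        using eq by blast+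
      then show "KL (P i) Q0 = KL (P k) Q0" by simp
    qed
  next
    fix R assume R: "R \<in> aff_L P {1..4} \<and> (\<forall>i\<in>{1..4}. \<forall>k\<in>{1..4}. KL (P i) R = KL (P k) R)"
    have "1 \<in> {1..4::nat}" by simp
    then have "\<forall>i\<in>{1..4}. KL (P i) R = KL (P 1) R" using R by blast
    moreover have "R \<in> aff_L P {1..4}" "Q0 \<in> aff_L P {1..4}" using R pc by blast+
    ultimately show "R = Q0"
      using equi_unique[OF rows, of R Q0 "KL (P 1) R" "KL (P 1) Q' - KL Q0 Q'"] eq by blast
  qed
  moreover have "\<forall>i\<in>{1..4}. KL (P i) Q0 = KL (P 1) Q0"
  proof
    fix i assume i: "i \<in> {1..4::nat}"
    have "(1::nat) \<in> {1..4}" by simp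
    then have "KL (P i) Q0 = KL (P 1) Q' - KL Q0 Q'" "KL (P 1) Q0 = KL (P 1) Q' - KL Q0 Q'"
      using eq i by blast+
    then show "KL (P i) Q0 = KL (P 1) Q0" by (simp only:)
  qed
  ultimately show ?thesis using pc by (simp only:)
qed



theorem theorem21:
  fixes P :: "nat \<Rightarrow> 'b::finite \<Rightarrow> real"
  assumes rows: "\<forall>i\<in>{1..4}. P i \<in> open_simplex"
    and gp: "general_position P 4"
    and l0: "bary P {1..4} (equidistant P {1..4}) 1 < 0"
            "bary P {1..4} (equidistant P {1..4}) 2 < 0"
            "bary P {1..4} (equidistant P {1..4}) 3 \<ge> 0"
            "bary P {1..4} (equidistant P {1..4}) 4 \<ge> 0"
    and l12: "bary P {1..4} (proj (equidistant P {1..4}) (aff_L P {1,3,4})) 1 < 0"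
    and l11: "bary P {1..4} (proj (equidistant P {1..4}) (aff_L P {2,3,4})) 2 < 0"
             "bary P {1..4} (proj (equidistant P {1..4}) (aff_L P {2,3,4})) 3 \<ge> 0"
             "bary P {1..4} (proj (equidistant P {1..4}) (aff_L P {2,3,4})) 4 \<ge> 0"
  shows "capacity P {1..4}
           = KL (P 3) (proj (proj (equidistant P {1..4}) (aff_L P {2,3,4})) (aff_L P {3,4}))
       \<and> (\<exists>l\<in>closed_simplex {1..4}. mutual_info P {1..4} l = capacity P {1..4})
       \<and> (\<forall>l\<in>closed_simplex {1..4}. mutual_info P {1..4} l = capacity P {1..4} \<longrightarrow>
            comb P {1..4} l = proj (proj (equidistant P {1..4}) (aff_L P {2,3,4})) (aff_L P {3,4}))"
proof -
  define Q0 where "Q0 = equidistant P {1..4}"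
  have Q0: "Q0 \<in> aff_L P {1..4}" "\<forall>i\<in>{1..4}. KL (P i) Q0 = KL (P 1) Q0"
    using equi_char[OF rows gp] unfolding Q0_def by blast+
  have Q0o: "Q0 \<in> open_simplex" using Q0(1) aff_L_iff by blast
  define r0 where "r0 = KL (P 1) Q0"
  have d0: "KL (P i) Q0 = r0" if "i \<in> {1,2,3,4}" for i
  proof -
    have "i \<in> {1..4}" using that by auto
    then show ?thesis using Q0(2) unfolding r0_def by blast
  qed
  have rows': "P 1 \<in> open_simplex" "P 2 \<in> open_simplex" "P 3 \<in> open_simplex" "P 4 \<in> open_simplex"
    using rows by (auto simp: e14)
  have rows234: "\<forall>i\<in>{2,3,4}. P i \<in> open_simplex" using rows' by auto
  have rows134: "\<forall>i\<in>{1,3,4}. P i \<in> open_simplex" using rows' by auto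
  have rows34: "\<forall>i\<in>{3,4}. P i \<in> open_simplex" using rows' by auto
  define Q1 where "Q1 = proj Q0 (aff_L P {2,3,4})"
  have pc1: "Q1 \<in> aff_L P {2,3,4} \<and> (\<forall>i\<in>{2,3,4}. KL (P i) Q0 - KL (P i) Q1 = KL Q1 Q0)"
    unfolding Q1_def by (rule proj_char[of "{2,3,4}" 2 P Q0, OF _ _ rows234 Q0o]) auto
  define r1 where "r1 = r0 - KL Q1 Q0"
  have d1: "KL (P i) Q1 = r1" if "i \<in> {2,3,4}" for i
  proof -
    have "KL (P i) Q0 - KL (P i) Q1 = KL Q1 Q0" using pc1 that by blast
    moreover have "KL (P i) Q0 = r0" using d0 that by auto
    ultimately show ?thesis unfolding r1_def by linarith
  qed
  have Q1o: "Q1 \<in> open_simplex" using pc1 aff_L_iff by blast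
  define Q12 where "Q12 = proj Q0 (aff_L P {1,3,4})"
  have pc12: "Q12 \<in> aff_L P {1,3,4} \<and> (\<forall>i\<in>{1,3,4}. KL (P i) Q0 - KL (P i) Q12 = KL Q12 Q0)"
    unfolding Q12_def by (rule proj_char[of "{1,3,4}" 1 P Q0, OF _ _ rows134 Q0o]) auto
  define r12 where "r12 = r0 - KL Q12 Q0"
  have d12: "KL (P i) Q12 = r12" if "i \<in> {1,3,4}" for i
  proof -
    have "KL (P i) Q0 - KL (P i) Q12 = KL Q12 Q0" using pc12 that by blast
    moreover have "KL (P i) Q0 = r0" using d0 that by auto
    ultimately show ?thesis unfolding r12_def by linarith
  qed
  have Q12o: "Q12 \<in> open_simplex" using pc12 aff_L_iff by blast
  define Q2 where "Q2 = proj Q1 (aff_L P {3,4})"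
  have pc2: "Q2 \<in> aff_L P {3,4} \<and> (\<forall>i\<in>{3,4}. KL (P i) Q1 - KL (P i) Q2 = KL Q2 Q1)"
    unfolding Q2_def by (rule proj_char[of "{3,4}" 3 P Q1, OF _ _ rows34 Q1o]) auto
  define r2 where "r2 = r1 - KL Q2 Q1"
  have d2: "KL (P i) Q2 = r2" if "i \<in> {3,4}" for i
  proof -
    have "KL (P i) Q1 - KL (P i) Q2 = KL Q2 Q1" using pc2 that by blast
    moreover have "KL (P i) Q1 = r1" using d1 that by auto
    ultimately show ?thesis unfolding r2_def by linarith
  qed
  have Q2o: "Q2 \<in> open_simplex" using pc2 aff_L_iff by blast
  obtain k where k: "sum k {2,3,4} = 1" "Q1 = comb P {2,3,4} k" using pc1 by (auto simp: aff_L_def)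
  have "bary P {1..4} Q1 = (\<lambda>i. if i \<in> {2,3,4} then k i else 0)"
  proof (rule bary_eq[OF gp])
    show "\<forall>i. i \<notin> {1..4} \<longrightarrow> (if i \<in> {2,3,4} then k i else 0) = 0" by auto
    show "(\<Sum>i\<in>{1..4}. if i \<in> {2,3,4} then k i else 0) = 1" using k(1) unfolding e14 by simp
    show "Q1 = comb P {1..4} (\<lambda>i. if i \<in> {2,3,4} then k i else 0)"
      using k(2) unfolding comb_def e14 by simp
  qed
  then have k2: "k 2 < 0" using l11(1) unfolding Q1_def Q0_def by simp
  obtain m where m: "sum m {1,3,4} = 1" "Q12 = comb P {1,3,4} m" using pc12 by (auto simp: aff_L_def)
  have "bary P {1..4} Q12 = (\<lambda>i. if i \<in> {1,3,4} then m i else 0)"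
  proof (rule bary_eq[OF gp])
    show "\<forall>i. i \<notin> {1..4} \<longrightarrow> (if i \<in> {1,3,4} then m i else 0) = 0" by auto
    show "(\<Sum>i\<in>{1..4}. if i \<in> {1,3,4} then m i else 0) = 1" using m(1) unfolding e14 by simp
    show "Q12 = comb P {1..4} (\<lambda>i. if i \<in> {1,3,4} then m i else 0)"
      using m(2) unfolding comb_def e14 by simp
  qed
  then have m1: "m 1 < 0" using l12 unfolding Q12_def Q0_def by simp
  obtain n where n: "sum n {3,4} = 1" "Q2 = comb P {3,4} n" using pc2 by (auto simp: aff_L_def)
  have ns: "n 3 + n 4 = 1" using n(1) by simp
  have ms: "m 1 + m 3 + m 4 = 1" using m(1) by simp
  have ks: "k 2 + k 3 + k 4 = 1" using k(1) by simp
  have K1: "KL (P 1) Q2 \<le> r2"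
  proof -
    define A where "A = KL Q2 Q12"
    define B where "B = KL Q12 Q2"
    have A0: "A \<ge> 0" "B \<ge> 0" unfolding A_def B_def using gibbs Q2o Q12o by blast+
    have "(\<Sum>i\<in>{1,3,4}. m i * (KL (P i) Q2 - KL (P i) Q12)) = B"
      unfolding B_def by (rule mix_KL[OF rows134 Q2o Q12o m(2)])
    then have h1: "m 1 * (KL (P 1) Q2 - r12) + m 3 * (r2 - r12) + m 4 * (r2 - r12) = B"
      using d12 d2 by (simp add: add.assoc)
    have "(\<Sum>i\<in>{3,4}. n i * (KL (P i) Q12 - KL (P i) Q2)) = A"
      unfolding A_def by (rule mix_KL[OF rows34 Q12o Q2o n(2)])
    then have "n 3 * (r12 - r2) + n 4 * (r12 - r2) = A" using d12 d2 by simp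
    then have h2: "r12 = r2 + A" using ns by (simp add: ring_distribs[symmetric] distrib_right[symmetric])
    have "m 1 * (KL (P 1) Q2 - r2) - (m 1 + m 3 + m 4) * A
        = m 1 * (KL (P 1) Q2 - r12) + m 3 * (r2 - r12) + m 4 * (r2 - r12)"
      unfolding h2 by (simp add: algebra_simps)
    moreover have "(m 1 + m 3 + m 4) * A = A" using ms by simp
    ultimately have "m 1 * (KL (P 1) Q2 - r2) = A + B" using h1 by linarith
    then have ge: "m 1 * (KL (P 1) Q2 - r2) \<ge> 0" using A0 by simp
    show ?thesis
    proof (rule ccontr)
      assume "\<not> ?thesis"
      then have "KL (P 1) Q2 - r2 > 0" by simp
      then have "m 1 * (KL (P 1) Q2 - r2) < 0" using m1 by (rule mult_neg_pos[rotated])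
      then show False using ge by simp
    qed
  qed
  have K2: "KL (P 2) Q2 \<le> r2"
  proof -
    define A where "A = KL Q2 Q1"
    define B where "B = KL Q1 Q2"
    have A0: "A \<ge> 0" "B \<ge> 0" unfolding A_def B_def using gibbs Q2o Q1o by blast+
    have "(\<Sum>i\<in>{2,3,4}. k i * (KL (P i) Q2 - KL (P i) Q1)) = B"
      unfolding B_def by (rule mix_KL[OF rows234 Q2o Q1o k(2)])
    then have h1: "k 2 * (KL (P 2) Q2 - r1) + k 3 * (r2 - r1) + k 4 * (r2 - r1) = B"
      using d1 d2 by (simp add: add.assoc)
    have h2: "r1 = r2 + A" unfolding r2_def A_def by simp
    have "k 2 * (KL (P 2) Q2 - r2) - (k 2 + k 3 + k 4) * A
        = k 2 * (KL (P 2) Q2 - r1) + k 3 * (r2 - r1) + k 4 * (r2 - r1)"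
      unfolding h2 by (simp add: algebra_simps)
    moreover have "(k 2 + k 3 + k 4) * A = A" using ks by simp
    ultimately have "k 2 * (KL (P 2) Q2 - r2) = A + B" using h1 by linarith
    then have ge: "k 2 * (KL (P 2) Q2 - r2) \<ge> 0" using A0 by simp
    show ?thesis
    proof (rule ccontr)
      assume "\<not> ?thesis"
      then have "KL (P 2) Q2 - r2 > 0" by simp
      then have "k 2 * (KL (P 2) Q2 - r2) < 0" using k2 by (rule mult_neg_pos[rotated])
      then show False using ge by simp
    qed
  qed
  have r2nn: "r2 \<ge> 0" using d2[of 3] gibbs[OF rows'(3) Q2o] by simp
  have K34: "KL (P 4) (P 3) > 0" "KL (P 3) (P 4) > 0"
  proof -
    have ne: "P 3 \<noteq> P 4"
    proof
      assume e: "P 3 = P 4"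
      have "\<forall>j. 0 * (P 2 j - P 1 j) + 1 * (P 3 j - P 1 j) + (-1) * (P 4 j - P 1 j) = 0"
        using e by simp
      then have "(0::real) = 0 \<and> (1::real) = 0 \<and> (-1::real) = 0" by (rule gp3[OF gp])
      then show False by simp
    qed
    have "KL (P 4) (P 3) \<noteq> 0"
    proof
      assume "KL (P 4) (P 3) = 0"
      then have "P 4 = P 3" using gibbs_eq[OF rows'(4) rows'(3)] by simp
      then show False using ne by simp
    qed
    then show "KL (P 4) (P 3) > 0" using gibbs[OF rows'(4) rows'(3)] by simp
    have "KL (P 3) (P 4) \<noteq> 0"
    proof
      assume "KL (P 3) (P 4) = 0"
      then have "P 3 = P 4" using gibbs_eq[OF rows'(3) rows'(4)] by simp
      then show False using ne by simp
    qed
    then show "KL (P 3) (P 4) > 0" using gibbs[OF rows'(3) rows'(4)] by simp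
  qed
  have n4: "n 4 \<ge> 0"
  proof -
    have "(\<Sum>i\<in>{3,4}. n i * (KL (P i) (P 3) - KL (P i) Q2)) = KL Q2 (P 3)"
      by (rule mix_KL[OF rows34 rows'(3) Q2o n(2)])
    then have "n 3 * (0 - r2) + n 4 * (KL (P 4) (P 3) - r2) = KL Q2 (P 3)"
      using d2 by (simp add: KL_self)
    moreover have "KL Q2 (P 3) \<ge> 0" using gibbs[OF Q2o rows'(3)] .
    moreover have "n 4 * KL (P 4) (P 3) - (n 3 + n 4) * r2 = n 3 * (0 - r2) + n 4 * (KL (P 4) (P 3) - r2)"
      by (simp add: algebra_simps)
    ultimately have "n 4 * KL (P 4) (P 3) \<ge> 0" using ns r2nn by simp
    then show ?thesis using K34(1) by (simp add: zero_le_mult_iff)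
  qed
  have n3: "n 3 \<ge> 0"
  proof -
    have "(\<Sum>i\<in>{3,4}. n i * (KL (P i) (P 4) - KL (P i) Q2)) = KL Q2 (P 4)"
      by (rule mix_KL[OF rows34 rows'(4) Q2o n(2)])
    then have "n 3 * (KL (P 3) (P 4) - r2) + n 4 * (0 - r2) = KL Q2 (P 4)"
      using d2 by (simp add: KL_self)
    moreover have "KL Q2 (P 4) \<ge> 0" using gibbs[OF Q2o rows'(4)] .
    moreover have "n 3 * KL (P 3) (P 4) - (n 3 + n 4) * r2 = n 3 * (KL (P 3) (P 4) - r2) + n 4 * (0 - r2)"
      by (simp add: algebra_simps)
    ultimately have "n 3 * KL (P 3) (P 4) \<ge> 0" using ns r2nn by simp
    then show ?thesis using K34(2) by (simp add: zero_le_mult_iff)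
  qed
  have Kall: "KL (P i) Q2 \<le> r2" if "i \<in> {1..4}" for i
    using that K1 K2 d2 unfolding e14 by auto
  define nu where "nu i = (if i \<in> {3,4} then n i else 0)" for i :: nat
  have nuS: "nu \<in> closed_simplex {1..4}"
    unfolding closed_simplex_def nu_def e14 using n3 n4 ns by auto
  have nuQ: "comb P {1..4} nu = Q2" using n(2) unfolding comb_def nu_def e14 by (simp add: fun_eq_iff)
  have MI: "mutual_info P {1..4} l = (\<Sum>i\<in>{1..4}. l i * KL (P i) Q2) - KL (comb P {1..4} l) Q2
            \<and> comb P {1..4} l \<in> open_simplex"
    if l: "l \<in> closed_simplex {1..4}" for l
  proof -
    define Ql where "Ql = comb P {1..4} l"
    have lnn: "\<forall>i\<in>{1..4}. l i \<ge> 0" and ls: "sum l {1..4} = 1" using l by (auto simp: closed_simplex_def)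
    obtain i0 where i0: "i0 \<in> {1..4}" "l i0 > 0"
    proof (rule ccontr)
      assume "\<not> thesis"
      then have "\<forall>i\<in>{1..4}. l i \<le> 0" using that by force
      then have "sum l {1..4} \<le> 0" by (intro sum_nonpos) auto
      then show False using ls by simp
    qed
    have Qlp: "Ql j > 0" for j
      unfolding Ql_def comb_def
    proof (rule sum_pos2[of _ i0])
      have "P i0 \<in> open_simplex" using rows i0 by blast
      then show "0 < l i0 * P i0 j" using i0 os_pos by (auto intro!: mult_pos_pos)
      fix i assume i: "i \<in> {1..4::nat}"
      then have "P i \<in> open_simplex" using rows by blast
      then have "0 < P i j" "0 \<le> l i" using lnn i os_pos by auto
      then show "0 \<le> l i * P i j" by simp
    qed (use i0 in auto)
    have Qlo: "Ql \<in> open_simplex" unfolding open_simplex_def using Qlp comb_sum[OF rows, of l] ls Ql_def by simp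
    have "mutual_info P {1..4} l = (\<Sum>i\<in>{1..4}. l i * KL (P i) Ql)"
      unfolding mutual_info_def KL_def Ql_def by (simp add: sum_distrib_left mult.assoc)
    also have "\<dots> = (\<Sum>i\<in>{1..4}. l i * KL (P i) Q2) - (\<Sum>i\<in>{1..4}. l i * (KL (P i) Q2 - KL (P i) Ql))"
      by (simp add: sum_subtractf[symmetric] algebra_simps)
    also have "(\<Sum>i\<in>{1..4}. l i * (KL (P i) Q2 - KL (P i) Ql)) = KL Ql Q2"
      by (rule mix_KL[OF rows Q2o Qlo Ql_def])
    finally show ?thesis using Qlo unfolding Ql_def by simp
  qed
  have MIle: "mutual_info P {1..4} l \<le> r2 - KL (comb P {1..4} l) Q2" if l: "l \<in> closed_simplex {1..4}" for l
  proof -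
    have lnn: "\<forall>i\<in>{1..4}. l i \<ge> 0" and ls: "sum l {1..4} = 1" using l by (auto simp: closed_simplex_def)
    have "(\<Sum>i\<in>{1..4}. l i * KL (P i) Q2) \<le> (\<Sum>i\<in>{1..4}. l i * r2)"
      by (rule sum_mono) (use lnn Kall in \<open>auto intro: mult_left_mono\<close>)
    also have "\<dots> = r2" using ls by (simp add: sum_distrib_right[symmetric])
    finally show ?thesis using MI[OF l] by linarith
  qed
  have MInu: "mutual_info P {1..4} nu = r2"
  proof -
    have "(\<Sum>i\<in>{1..4}. nu i * KL (P i) Q2) = r2"
      unfolding nu_def e14 using d2 ns by (simp add: ring_distribs[symmetric] distrib_right[symmetric])
    then show ?thesis using MI[OF nuS] nuQ by (simp add: KL_self)
  qed
  have cap: "capacity P {1..4} = r2"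
    unfolding capacity_def
  proof (rule cSup_eq_maximum)
    show "r2 \<in> mutual_info P {1..4} ` closed_simplex {1..4}" using MInu nuS by force
    fix x assume "x \<in> mutual_info P {1..4} ` closed_simplex {1..4}"
    then obtain l where l: "l \<in> closed_simplex {1..4}" "x = mutual_info P {1..4} l" by blast
    have "KL (comb P {1..4} l) Q2 \<ge> 0" using gibbs MI[OF l(1)] Q2o by blast
    then show "x \<le> r2" using MIle[OF l(1)] l(2) by linarith
  qed
  have r2e: "r2 = KL (P 3) Q2" using d2 by simp
  show ?thesis
  proof (intro conjI)
    show "capacity P {1..4} = KL (P 3) (proj (proj (equidistant P {1..4}) (aff_L P {2,3,4})) (aff_L P {3,4}))"
      using cap r2e unfolding Q2_def Q1_def Q0_def by simp
    show "\<exists>l\<in>closed_simplex {1..4}. mutual_info P {1..4} l = capacity P {1..4}"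
      using nuS MInu cap by auto
    show "\<forall>l\<in>closed_simplex {1..4}. mutual_info P {1..4} l = capacity P {1..4} \<longrightarrow>
            comb P {1..4} l = proj (proj (equidistant P {1..4}) (aff_L P {2,3,4})) (aff_L P {3,4})"
    proof (intro ballI impI)
      fix l assume l: "l \<in> closed_simplex {1..4}" and eq: "mutual_info P {1..4} l = capacity P {1..4}"
      have "KL (comb P {1..4} l) Q2 \<le> 0" using MIle[OF l] eq cap by linarith
      then have "comb P {1..4} l = Q2" using gibbs_eq MI[OF l] Q2o by blast
      then show "comb P {1..4} l = proj (proj (equidistant P {1..4}) (aff_L P {2,3,4})) (aff_L P {3,4})"
        unfolding Q2_def Q1_def Q0_def .
    qed
  qed
qed

end
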